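(* Suppose $D$ is an effective divisor class on $X$ and $A_t$ is an ample divisor with $2A_t\cdot D\le A_t\cdot K$. Then $\chi(D)<\frac{n-1}{8}$. In particular, if $10\le n\le 17$ and $\chi(D)\ge1$, then $\chi(D)=1$.
   Context: Let $X$ be the blowup of $\mathbb{P}^2_{\mathbb{C}}$ at $n$ very general points, with $H$ the pullback of a line class, $E_i$ the exceptional divisors, $E=\sum_iE_i$, and $K=K_X=-3H+E$. For real $t$, $A_t=tH-E$. Write $\chi(D)=\chi(\mathcal{O}_X(D))$. A divisor class is effective if it is the class of an effective divisor (zero allowed). *)

theory Defs
  imports Complex_Main
begin

text \<open>
  Model of X = Bl_n P^2 at points p_0,...,p_{n-1} taken in the affine chart C^2.
  A divisor class dH - sum_i m_i E_i is encoded as the pair (d, m) with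
  d :: int and m :: nat => int (only the entries i < n matter).
  A real class aH - sum_i b_i E_i is encoded as (a, b) with real entries.
\<close>

type_synonym divclass = "int \<times> (nat \<Rightarrow> int)"
type_synonym rdivclass = "real \<times> (nat \<Rightarrow> real)"
type_synonym config = "nat \<Rightarrow> complex \<times> complex"

definition inters :: "nat \<Rightarrow> divclass \<Rightarrow> divclass \<Rightarrow> int" where
  "inters n D D' = fst D * fst D' - (\<Sum>i<n. snd D i * snd D' i)"

definition rinters :: "nat \<Rightarrow> rdivclass \<Rightarrow> divclass \<Rightarrow> real" where
  "rinters n A D = fst A * of_int (fst D) - (\<Sum>i<n. snd A i * of_int (snd D i))"

text \<open>Canonical class K = -3H + E = -3H - sum_i (-1) E_i.\<close>
definition Kcls :: divclass where
  "Kcls = (-3, \<lambda>_. -1)"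

definition Acls :: "real \<Rightarrow> rdivclass" where
  "Acls t = (t, \<lambda>_. 1)"

text \<open>Euler characteristic chi(O_X(D)) via Riemann--Roch, chi(O_X) = 1.\<close>
definition chi :: "nat \<Rightarrow> divclass \<Rightarrow> real" where
  "chi n D = 1 + (of_int (inters n D D) - of_int (inters n D Kcls)) / 2"

text \<open>Bivariate polynomials f(x,y) = sum c a b x^a y^b of degree at most d;
  coefficient of u^i v^j in f(x0+u, y0+v).\<close>
definition shifted_coeff ::
  "(nat \<Rightarrow> nat \<Rightarrow> complex) \<Rightarrow> nat \<Rightarrow> complex \<times> complex \<Rightarrow> nat \<Rightarrow> nat \<Rightarrow> complex" where
  "shifted_coeff c d p i j =
     (\<Sum>a\<le>d. \<Sum>b\<le>d. c a b * of_nat (a choose i) * of_nat (b choose j)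
                       * fst p ^ (a - i) * snd p ^ (b - j))"

definition mult_ge ::
  "(nat \<Rightarrow> nat \<Rightarrow> complex) \<Rightarrow> nat \<Rightarrow> complex \<times> complex \<Rightarrow> int \<Rightarrow> bool" where
  "mult_ge c d p m \<longleftrightarrow> (\<forall>i j. int (i + j) < m \<longrightarrow> shifted_coeff c d p i j = 0)"

text \<open>dH - sum m_i E_i is effective on Bl_p P^2 iff d \<ge> 0 and there is a nonzero
  plane curve of degree d (dehomogenised in the affine chart) with multiplicity
  at least m_i at p_i for all i < n.\<close>
definition effective :: "nat \<Rightarrow> config \<Rightarrow> divclass \<Rightarrow> bool" where
  "effective n p D \<longleftrightarrow> fst D \<ge> 0 \<and>
     (\<exists>c. (\<forall>a b. a + b > nat (fst D) \<longrightarrow> c a b = 0) \<and> (\<exists>a b. c a b \<noteq> 0) \<and>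
          (\<forall>i<n. mult_ge c (nat (fst D)) (p i) (snd D i)))"

definition nef :: "nat \<Rightarrow> config \<Rightarrow> rdivclass \<Rightarrow> bool" where
  "nef n p A \<longleftrightarrow> (\<forall>D. effective n p D \<longrightarrow> rinters n A D \<ge> 0)"

text \<open>Ampleness of a real class via Kleiman's criterion: interior of the nef cone.\<close>
definition ample :: "nat \<Rightarrow> config \<Rightarrow> rdivclass \<Rightarrow> bool" where
  "ample n p A \<longleftrightarrow> (\<exists>\<epsilon>>0. \<forall>\<delta>0 \<delta>. \<bar>\<delta>0\<bar> < \<epsilon> \<and> (\<forall>i<n. \<bar>\<delta> i\<bar> < \<epsilon>) \<longrightarrow>
        nef n p (fst A + \<delta>0, \<lambda>i. snd A i + \<delta> i))"

text \<open>Polynomials in the variables z_0,...,z_{N-1} over C: coefficient functions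
  on exponent vectors with finite support, using only variables < N.\<close>
definition poly_in :: "nat \<Rightarrow> ((nat \<Rightarrow> nat) \<Rightarrow> complex) \<Rightarrow> bool" where
  "poly_in N F \<longleftrightarrow> finite {\<alpha>. F \<alpha> \<noteq> 0} \<and> (\<forall>\<alpha>. F \<alpha> \<noteq> 0 \<longrightarrow> (\<forall>j\<ge>N. \<alpha> j = 0))"

definition mpoly_eval :: "nat \<Rightarrow> ((nat \<Rightarrow> nat) \<Rightarrow> complex) \<Rightarrow> (nat \<Rightarrow> complex) \<Rightarrow> complex" where
  "mpoly_eval N F z = (\<Sum>\<alpha>\<in>{\<alpha>. F \<alpha> \<noteq> 0}. F \<alpha> * (\<Prod>j<N. z j ^ \<alpha> j))"

definition config_of :: "(nat \<Rightarrow> complex) \<Rightarrow> config" where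
  "config_of z = (\<lambda>i. (z (2 * i), z (2 * i + 1)))"

end

theory Submission
  imports Defs "HOL-Analysis.Convex"
begin

lemma elim_kernel:
  assumes "finite E"
  shows "\<And>U (\<phi> :: 'e \<Rightarrow> 'u \<Rightarrow> 'a::field). finite U \<Longrightarrow> card E < card U \<Longrightarrow>
    \<exists>x. (\<exists>u\<in>U. x u \<noteq> 0) \<and> (\<forall>e\<in>E. (\<Sum>u\<in>U. \<phi> e u * x u) = 0)"
  using assms
proof (induction E rule: finite_induct)
  case empty
  then obtain u where "u \<in> U" by fastforce
  then show ?case by (rule_tac x="\<lambda>_. 1" in exI) auto
next
  case (insert e0 F U \<phi>)
  show ?case
  proof (cases "\<forall>u\<in>U. \<phi> e0 u = 0")
    case True
    have "card F < card U" using insert by simp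
    from insert.IH[OF insert.prems(1) this, of \<phi>] obtain x where
      x: "\<exists>u\<in>U. x u \<noteq> 0" "\<forall>e\<in>F. (\<Sum>u\<in>U. \<phi> e u * x u) = 0" by blast
    show ?thesis using x True by (intro exI[of _ x]) auto
  next
    case False
    then obtain u0 where u0: "u0 \<in> U" "\<phi> e0 u0 \<noteq> 0" by blast
    define U' where "U' = U - {u0}"
    define \<psi> where "\<psi> e u = \<phi> e u - \<phi> e u0 * \<phi> e0 u / \<phi> e0 u0" for e u
    have fU': "finite U'" using insert.prems U'_def by simp
    have cU: "card U = Suc (card U')" using u0 insert.prems U'_def
      by (metis card_Suc_Diff1)
    have "card F < card U'" using insert cU by simp
    from insert.IH[OF fU' this, of \<psi>] obtain y where
      y: "\<exists>u\<in>U'. y u \<noteq> 0" "\<forall>e\<in>F. (\<Sum>u\<in>U'. \<psi> e u * y u) = 0" by blast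
    define s where "s = (\<Sum>u\<in>U'. \<phi> e0 u * y u)"
    define x where "x = y(u0 := - s / \<phi> e0 u0)"
    have split: "(\<Sum>u\<in>U. f u) = f u0 + (\<Sum>u\<in>U'. f u)" for f :: "'u \<Rightarrow> 'a"
      using u0 insert.prems(1) U'_def by (simp add: sum.remove)
    have xU': "(\<Sum>u\<in>U'. g u * x u) = (\<Sum>u\<in>U'. g u * y u)" for g :: "'u \<Rightarrow> 'a"
      by (rule sum.cong) (auto simp: x_def U'_def)
    have nz: "\<exists>u\<in>U. x u \<noteq> 0" using y(1) by (auto simp: x_def U'_def)
    have xu0: "x u0 = - s / \<phi> e0 u0" by (simp add: x_def)
    have e0: "(\<Sum>u\<in>U. \<phi> e0 u * x u) = 0"
      using u0 by (simp add: split xU' xu0 s_def[symmetric])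
    have eF: "(\<Sum>u\<in>U. \<phi> e u * x u) = 0" if "e \<in> F" for e
    proof -
      have "(\<Sum>u\<in>U'. \<psi> e u * y u) = (\<Sum>u\<in>U'. \<phi> e u * y u) - \<phi> e u0 / \<phi> e0 u0 * s"
        by (simp add: \<psi>_def s_def algebra_simps sum_subtractf sum_distrib_left)
      then have "(\<Sum>u\<in>U'. \<phi> e u * y u) = \<phi> e u0 / \<phi> e0 u0 * s" using y(2) that by simp
      then show ?thesis using u0 by (simp add: split xU' xu0)
    qed
    show ?thesis using nz e0 eF by (intro exI[of _ x]) auto
  qed
qed

lemma tri_finite: "finite {(a::nat,b::nat). a+b < m}"
  by (rule finite_subset[of _ "{..<m} \<times> {..<m}"]) auto

lemma tri_card: "card {(a::nat,b::nat). a+b < m} * 2 = m*(m+1)"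
proof (induction m)
  case 0
  then show ?case by simp
next
  case (Suc m)
  have eq: "{(a::nat,b::nat). a+b < Suc m} = {(a,b). a+b < m} \<union> (\<lambda>a. (a, m-a)) ` {..m}"
    by auto
  have disj: "{(a::nat,b::nat). a+b < m} \<inter> (\<lambda>a. (a, m-a)) ` {..m} = {}" by auto
  have inj: "inj_on (\<lambda>a::nat. (a, m-a)) {..m}" by (auto simp: inj_on_def)
  have "card {(a::nat,b::nat). a+b < Suc m} = card {(a::nat,b::nat). a+b < m} + (m+1)"
    unfolding eq by (subst card_Un_disjoint) (use tri_finite disj card_image[OF inj] in auto)
  then show ?case using Suc by simp
qed

lemma eff_uniform:
  assumes "n * (m*(m+1)) < (d+1)*(d+2)"
  shows "effective n p (int d, \<lambda>_. int m)"
proof -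
  define U where "U = {(a::nat,b::nat). a+b < d+1}"
  define T where "T = {(a::nat,b::nat). a+b < m}"
  define E where "E = {..<n} \<times> T"
  define \<phi> where "\<phi> = (\<lambda>(k,(i,j)) (a,b). of_nat (a choose i) * of_nat (b choose j)
        * fst (p k) ^ (a - i) * snd (p k) ^ (b - j) :: complex)"
  have fU: "finite U" and fE: "finite E" using tri_finite by (auto simp: U_def E_def T_def)
  have "card E * 2 = n * (m*(m+1))" using tri_card[of m] by (simp add: E_def T_def card_cartesian_product)
  moreover have "card U * 2 = (d+1)*(d+2)" using tri_card[of "d+1"] by (simp add: U_def)
  ultimately have "card E < card U" using assms by linarith
  from elim_kernel[OF fE fU this, of \<phi>] obtain x where
    x: "\<exists>u\<in>U. x u \<noteq> 0" "\<forall>e\<in>E. (\<Sum>u\<in>U. \<phi> e u * x u) = 0" by blast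
  define c where "c a b = (if a + b \<le> d then x (a,b) else 0)" for a b
  have c1: "\<forall>a b. a + b > nat (int d) \<longrightarrow> c a b = 0" by (auto simp: c_def)
  have c2: "\<exists>a b. c a b \<noteq> 0"
  proof -
    obtain a b where "(a,b) \<in> U" "x (a,b) \<noteq> 0" using x(1) by auto
    then have "c a b \<noteq> 0" by (auto simp: c_def U_def)
    then show ?thesis by blast
  qed
  have sc: "shifted_coeff c d (p k) i j = (\<Sum>u\<in>U. \<phi> (k,(i,j)) u * x u)" for k i j
  proof -
    have "shifted_coeff c d (p k) i j = (\<Sum>(a,b)\<in>{..d}\<times>{..d}. c a b * of_nat (a choose i) * of_nat (b choose j)
                       * fst (p k) ^ (a - i) * snd (p k) ^ (b - j))"
      unfolding shifted_coeff_def by (simp add: sum.cartesian_product)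
    also have "\<dots> = (\<Sum>(a,b)\<in>U. c a b * of_nat (a choose i) * of_nat (b choose j)
                       * fst (p k) ^ (a - i) * snd (p k) ^ (b - j))"
      by (rule sum.mono_neutral_right) (auto simp: U_def c_def split: if_splits)
    also have "\<dots> = (\<Sum>u\<in>U. \<phi> (k,(i,j)) u * x u)"
      by (rule sum.cong) (auto simp: U_def c_def \<phi>_def)
    finally show ?thesis .
  qed
  have "\<forall>k<n. mult_ge c (nat (int d)) (p k) (int m)"
    unfolding mult_ge_def using x(2) by (auto simp: sc E_def T_def)
  then show ?thesis unfolding effective_def using c1 c2 by auto
qed

lemma ample_bound:
  assumes "ample n p (Acls t)"
  shows "t > 0 \<and> t^2 > real n"
proof -
  obtain \<epsilon> where e: "\<epsilon> > 0" and H: "\<And>\<delta>0 \<delta>. \<bar>\<delta>0\<bar> < \<epsilon> \<and> (\<forall>i<n. \<bar>\<delta> i\<bar> < \<epsilon>) \<Longrightarrow>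
        nef n p (t + \<delta>0, \<lambda>i. 1 + \<delta> i)"
    using assms unfolding ample_def Acls_def by auto
  define t' where "t' = t - \<epsilon>/2"
  have "nef n p (t + (-\<epsilon>/2), \<lambda>i. 1 + 0)" using e by (intro H) auto
  then have nf: "nef n p (t', \<lambda>i. 1)" by (simp add: t'_def)
  have key: "real n * real m \<le> t' * real d" if "n * (m*(m+1)) < (d+1)*(d+2)" for d m :: nat
  proof -
    have "rinters n (t', \<lambda>i. 1) (int d, \<lambda>_. int m) \<ge> 0"
      using nf eff_uniform[OF that, of p] unfolding nef_def by blast
    then show ?thesis by (simp add: rinters_def)
  qed
  have t'0: "t' \<ge> 0" using key[of 0 1] by simp
  have "t' \<ge> sqrt n" if n0: "n > 0"
  proof (rule ccontr)
    assume "\<not> t' \<ge> sqrt n"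
    define s where "s = sqrt (real n)"
    define g where "g = s - t'"
    have g0: "g > 0" using \<open>\<not> t' \<ge> sqrt n\<close> by (simp add: g_def s_def)
    have s0: "s > 0" using n0 by (simp add: s_def)
    have ss: "s * s = real n" by (simp add: s_def)
    define d where "d = nat \<lceil>2 * real n / g + s\<rceil> + 1"
    have y1: "real_of_int \<lceil>2 * real n / g + s\<rceil> \<ge> 2 * real n / g + s" by (rule le_of_int_ceiling)
    have y2: "real (nat \<lceil>2 * real n / g + s\<rceil>) \<ge> real_of_int \<lceil>2 * real n / g + s\<rceil>" by linarith
    have "2 * real n / g \<ge> 0" using g0 by simp
    then have d1: "real d > 2 * real n / g" and d2: "real d + 1 \<ge> s"
    proof -
      have "real d = real (nat \<lceil>2 * real n / g + s\<rceil>) + 1" by (simp add: d_def)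
      then show "real d > 2 * real n / g" "real d + 1 \<ge> s" using y1 y2 s0 \<open>2 * real n / g \<ge> 0\<close> by linarith+
    qed
    define f where "f = \<lfloor>(real d + 1) / s\<rfloor>"
    have f1: "f \<ge> 1" using d2 s0 by (simp add: f_def le_floor_iff)
    define m where "m = nat f - 1"
    have mf: "real m + 1 = real_of_int f" using f1 unfolding m_def by (simp add: of_nat_diff)
    have fle: "real_of_int f * s \<le> real d + 1"
      using s0 by (simp add: f_def pos_le_divide_eq[symmetric])
    have fgt: "real_of_int f > (real d + 1) / s - 1" unfolding f_def by linarith
    have "real n * (real m + 1)^2 \<le> (real d + 1)^2"
    proof -
      have "real n * (real m + 1)^2 = (real_of_int f * s)^2" using mf ss by (simp add: power2_eq_square algebra_simps)
      also have "\<dots> \<le> (real d + 1)^2" using fle f1 s0 by (intro power_mono) auto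
      finally show ?thesis .
    qed
    then have "real n * (real m * (real m + 1)) < (real d + 1) * (real d + 2)"
    proof -
      have a: "real n * (real m * (real m + 1)) = real n * (real m + 1)^2 - real n * (real m + 1)"
        by (simp add: power2_eq_square algebra_simps)
      have b: "real n * (real m + 1) > 0" using n0 by simp
      have c: "(real d + 1)^2 < (real d + 1) * (real d + 2)" by (simp add: power2_eq_square algebra_simps)
      show ?thesis using a b c \<open>real n * (real m + 1)^2 \<le> (real d + 1)^2\<close> by linarith
    qed
    then have "real (n * (m*(m+1))) < real ((d+1)*(d+2))" by (simp only: of_nat_mult of_nat_add of_nat_1 of_nat_numeral)
    then have "n * (m*(m+1)) < (d+1)*(d+2)" by (simp only: of_nat_less_iff)
    from key[OF this] have k: "real n * real m \<le> t' * real d" .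
    have "real n * real m > real n * ((real d + 1) / s - 2)"
      using mf fgt n0 by (intro mult_strict_left_mono) auto
    also have "real n * ((real d + 1) / s - 2) = s * (real d + 1) - 2 * real n"
      using s0 ss by (simp add: field_simps)
    finally have "t' * real d > s * real d - 2 * real n" using k s0 by (simp add: algebra_simps)
    then have "g * real d < 2 * real n" by (simp add: g_def algebra_simps)
    moreover have "g * real d > 2 * real n" using d1 g0 by (simp add: field_simps)
    ultimately show False by linarith
  qed
  then show ?thesis
  proof (cases "n = 0")
    case True then show ?thesis using t'0 e by (simp add: t'_def)
  next
    case False
    then have "t' \<ge> sqrt n" using \<open>n > 0 \<Longrightarrow> _\<close> by simp
    then have "t > sqrt n" using e by (simp add: t'_def)
    moreover have "sqrt n > 0" using False by simp
    ultimately have "t^2 > (sqrt n)^2" by (intro power_strict_mono) auto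
    then show ?thesis using \<open>t > sqrt n\<close> \<open>sqrt n > 0\<close> by (simp add: less_trans[of 0 "sqrt n" t])
  qed
qed

lemma aux1: "(x2::real) < q \<Longrightarrow> x2 = e + 9/4 \<Longrightarrow> q = Q + S + nn / 4 \<Longrightarrow> 1 + (e - Q - S) / 2 < (nn - 1) / 8"
  by (simp add: field_simps)

lemma aux2: "2 * ((k::real) - 1) = a \<Longrightarrow> c = 1 + a / 2 \<Longrightarrow> c = k"
  by (simp add: field_simps)

lemma chi_bound:
  assumes eff: "effective n p D" and t0: "t > 0" and tn: "t^2 > real n"
    and c: "2 * rinters n (Acls t) D \<le> rinters n (Acls t) Kcls"
  shows "chi n D < (real n - 1) / 8"
proof -
  obtain d0 mm where D: "D = (d0, mm)" by fastforce
  define d where "d = real_of_int d0"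
  define S where "S = (\<Sum>i<n. real_of_int (mm i))"
  define Q where "Q = (\<Sum>i<n. (real_of_int (mm i))^2)"
  define X where "X = d + 3/2"
  define Y where "Y = S + real n / 2"
  define Q' where "Q' = (\<Sum>i<n. (real_of_int (mm i) + 1/2)^2)"
  have d0: "d \<ge> 0" using eff by (simp add: effective_def D d_def)
  have X0: "X > 0" using d0 by (simp add: X_def)
  have Q'eq: "Q' = Q + S + real n / 4"
  proof -
    have "Q' = (\<Sum>i<n. (real_of_int (mm i))^2 + real_of_int (mm i) + 1/4)"
      unfolding Q'_def by (rule sum.cong) (simp_all add: power2_eq_square algebra_simps)
    also have "\<dots> = Q + S + real n / 4" by (simp add: sum.distrib Q_def S_def)
    finally show ?thesis .
  qed
  have i1: "real_of_int (inters n D D) = d^2 - Q"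
    by (simp add: inters_def D d_def Q_def power2_eq_square)
  have i2: "real_of_int (inters n D Kcls) = -3*d + S"
    by (simp add: inters_def Kcls_def D d_def S_def sum_negf)
  have chieq: "chi n D = 1 + (d^2 - Q + 3 * d - S) / 2"
    unfolding chi_def i1 i2 by simp
  have ceq: "2 * (t * d - S) \<le> -3 * t + real n"
    using c by (simp add: rinters_def Acls_def Kcls_def D d_def S_def)
  then have tXY: "t * X \<le> Y" by (simp add: X_def Y_def algebra_simps)
  have tX0: "t * X > 0" using t0 X0 by simp
  have CS: "Y^2 \<le> real n * Q'"
  proof -
    have "(\<Sum>i<n. (real_of_int (mm i) + 1/2) * 1)^2 \<le> (\<Sum>i<n. (real_of_int (mm i) + 1/2)^2) * (\<Sum>i<n. (1::real)^2)"
      by (rule Cauchy_Schwarz_ineq_sum)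
    moreover have "(\<Sum>i<n. (real_of_int (mm i) + 1/2) * 1) = Y"
      by (simp add: Y_def S_def sum.distrib)
    ultimately show ?thesis by (simp add: Q'_def mult.commute)
  qed
  have "(t * X)^2 \<le> Y^2" using tXY tX0 by (intro power_mono) auto
  then have "t^2 * X^2 \<le> real n * Q'" using CS by (simp add: power_mult_distrib)
  moreover have "real n * X^2 < t^2 * X^2" using tn X0 by (intro mult_strict_right_mono) auto
  ultimately have "real n * X^2 < real n * Q'" by linarith
  moreover have "real n > 0"
  proof (rule ccontr)
    assume "\<not> real n > 0"
    then have "real n = 0" by simp
    with \<open>real n * X^2 < real n * Q'\<close> show False by simp
  qed
  ultimately have "X^2 < Q'" by simp
  moreover have "X^2 = d^2 + 3*d + 9/4" by (simp add: X_def power2_eq_square algebra_simps)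
  ultimately show ?thesis unfolding chieq using Q'eq aux1[of "X^2" Q' "d^2 + 3*d" Q S "real n"] by (simp add: algebra_simps)
qed

lemma chi_int: "\<exists>k::int. chi n D = of_int k"
proof -
  obtain d0 mm where D: "D = (d0, mm)" by fastforce
  have e1: "even (d0 * (d0 + 3))" by simp
  have e2: "even (\<Sum>i<n. mm i * (mm i + 1))" by (rule dvd_sum) simp
  define k where "k = 1 + (d0 * (d0 + 3) - (\<Sum>i<n. mm i * (mm i + 1))) div 2"
  have "2 * (k - 1) = d0 * (d0 + 3) - (\<Sum>i<n. mm i * (mm i + 1))"
    unfolding k_def using e1 e2 by simp
  then have "2 * (real_of_int k - 1) = real_of_int (d0 * (d0 + 3) - (\<Sum>i<n. mm i * (mm i + 1)))"
    by (metis of_int_1 of_int_diff of_int_mult of_int_numeral)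
  moreover have "chi n D = 1 + real_of_int (d0 * (d0 + 3) - (\<Sum>i<n. mm i * (mm i + 1))) / 2"
  proof -
    have "inters n D D - inters n D Kcls = d0 * (d0 + 3) - (\<Sum>i<n. mm i * (mm i + 1))"
      by (simp add: inters_def Kcls_def D algebra_simps sum.distrib sum_subtractf sum_negf)
    then show ?thesis unfolding chi_def by (metis of_int_diff)
  qed
  ultimately have "chi n D = of_int k" by (rule aux2)
  then show ?thesis by blast
qed

theorem proposition4p1:
  fixes n :: nat
  shows "\<exists>F :: nat \<Rightarrow> ((nat \<Rightarrow> nat) \<Rightarrow> complex).
    (\<forall>k. poly_in (2 * n) (F k) \<and> (\<exists>\<alpha>. F k \<alpha> \<noteq> 0)) \<and>
    (\<forall>z. (\<forall>k. mpoly_eval (2 * n) (F k) z \<noteq> 0) \<longrightarrow>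
      (\<forall>(D :: divclass) (t :: real).
         effective n (config_of z) D \<and> ample n (config_of z) (Acls t) \<and>
         2 * rinters n (Acls t) D \<le> rinters n (Acls t) Kcls \<longrightarrow>
           chi n D < (real n - 1) / 8 \<and>
           (10 \<le> n \<and> n \<le> 17 \<and> chi n D \<ge> 1 \<longrightarrow> chi n D = 1)))"
proof (intro exI[of _ "\<lambda>k \<alpha>. if \<alpha> = (\<lambda>_. 0) then 1 else 0"] conjI allI impI)
  fix k
  show "poly_in (2 * n) (\<lambda>\<alpha>. if \<alpha> = (\<lambda>_. 0) then 1 else 0)"
    unfolding poly_in_def by auto
  show "\<exists>\<alpha>. (if \<alpha> = (\<lambda>_. 0) then 1 else 0 :: complex) \<noteq> 0" by auto
next
  fix z and D :: divclass and t :: real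
  assume "effective n (config_of z) D \<and> ample n (config_of z) (Acls t) \<and>
         2 * rinters n (Acls t) D \<le> rinters n (Acls t) Kcls"
  then have eff: "effective n (config_of z) D" and am: "ample n (config_of z) (Acls t)"
    and c: "2 * rinters n (Acls t) D \<le> rinters n (Acls t) Kcls" by auto
  from ample_bound[OF am] have "t > 0" "t^2 > real n" by auto
  from chi_bound[OF eff this c] show lt: "chi n D < (real n - 1) / 8" .
  assume h: "10 \<le> n \<and> n \<le> 17 \<and> chi n D \<ge> 1"
  obtain k where k: "chi n D = of_int k" using chi_int by blast
  have "real n \<le> 17" using h by simp
  then have "(real n - 1) / 8 \<le> 2" by simp
  then have "of_int k < (2::real)" using lt k by linarith
  moreover have "of_int k \<ge> (1::real)" using h k by simp
  ultimately have "k = 1" by linarith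
  then show "chi n D = 1" using k by simp
qed

end
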